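(* Let $k$ be a field and $S=k[x_1,\dots,x_n]$. (1) Let $I\subseteq K\subseteq S$ and $J\subseteq L\subseteq S$ be monomial ideals with $\dim_k S/I<\infty$, $\dim_k S/J<\infty$, and let $\phi\colon K/I\to L/J$ be an $S$-module isomorphism sending monomials to monomials. Let $\lambda$ (resp. $\mu$) be the $n$-dimensional Young diagram corresponding to $I$ (resp. $J$). Then there exist connected abstract skew shapes $\nu_1,\dots,\nu_r$ and lattice points $b_1,\dots,b_r,c_1,\dots,c_r\in\mathbb{Z}^n$ such that $\nu_1+b_1,\dots,\nu_r+b_r$ are exactly the connected components of the skew shape associated with $K/I$, $\nu_1+c_1,\dots,\nu_r+c_r$ are exactly the connected components of the skew shape associated with $L/J$, $\phi(x^{v+b_i})=x^{v+c_i}$ for all $i$ and $v\in\nu_i$, and the following hold: (a) $\nu_1+b_1,\dots,\nu_r+b_r$ are pairwise disjoint and contained in $\lambda$; (b) for all $w\in\mathbb{N}^n$ and all $v_i\in\nu_i$ with $v_i+b_i+w\in\lambda$, we have $v_i+w\in\nu_i$; (c) $\nu_1+c_1,\dots,\nu_r+c_r$ are pairwise disjoint and contained in $\mu$; (d) for all $w\in\mathbb{N}^n$ and all $v_i\in\nu_i$ with $v_i+c_i+w\in\mu$, we have $v_i+w\in\nu_i$. (2) Conversely, given $n$-dimensional Young diagrams $\lambda,\mu$, connected abstract skew shapes $\nu_1,\dots,\nu_r$ and lattice points $b_1,\dots,b_r,c_1,\dots,c_r\in\mathbb{Z}^n$ satisfying (a)–(d), there exist monomial ideals $I\subseteq K$,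 $J\subseteq L$ of $S$ with $\dim_k S/I,\dim_k S/J<\infty$ and an $S$-module isomorphism $\phi\colon K/I\to L/J$ sending monomials to monomials, such that $\lambda$ (resp. $\mu$) is the Young diagram corresponding to $I$ (resp. $J$), the connected components of the skew shape of $K/I$ (resp. $L/J$) are the $\nu_i+b_i$ (resp. $\nu_i+c_i$), and $\phi(x^{v+b_i})=x^{v+c_i}$ for all $i$ and $v\in\nu_i$.
   Context: Monomials $x^a=x_1^{a_1}\cdots x_n^{a_n}$ are identified with $a\in\mathbb{N}^n$, which carries the componentwise partial order. An $n$-dimensional Young diagram is a finite subset $\lambda\subseteq\mathbb{N}^n$ such that $w\in\lambda$ and $v\le w$ imply $v\in\lambda$; the Young diagram corresponding to a monomial ideal $I$ with $\dim_k S/I<\infty$ is $\{a\in\mathbb{N}^n : x^a\notin I\}$. The skew shape associated with $K/I$ (for monomial ideals $I\subseteq K$) is $\{a : x^a\in K,\ x^a\notin I\}$; a skew shape is a difference $\lambda\setminus\lambda'$ of two Young diagrams. A set $\epsilon$ is connected if for any $a,b\in\epsilon$ there exist $a',b'\in\mathbb{N}^n$ with $a+a'=b+b'\in\epsilon$; every skew shape decomposes uniquely as a disjoint union of connected ones (its connected components). Each skew shape $\nu$ has a unique lexicographically smallest point $\ell_\nu$; an abstract skew shape is a set of the form $\nu-\ell_\nu\subseteq\mathbb{Z}^n$ for a skew shape $\nu$, and it is connected if $\nu$ is. An isomorphism $\phi\colon K/I\to L/J$ sends monomials to monomials if it maps the class of each monomial of $K$ not in $I$ to the class of a monomial of $L$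 not in $J$. *)

theory Defs
  imports Main
begin

text \<open>Lattice points of Z^n are functions nat => int vanishing outside {..<n};
  N^n is the subset of nonnegative ones. Monomial x^a is identified with a.\<close>

type_synonym pt = "nat \<Rightarrow> int"

definition Zn :: "nat \<Rightarrow> pt set" where
  "Zn n = {a. \<forall>i\<ge>n. a i = 0}"

definition Nn :: "nat \<Rightarrow> pt set" where
  "Nn n = {a \<in> Zn n. \<forall>i. 0 \<le> a i}"

definition vadd :: "pt \<Rightarrow> pt \<Rightarrow> pt" where
  "vadd a b = (\<lambda>i. a i + b i)"

definition vsub :: "pt \<Rightarrow> pt \<Rightarrow> pt" where
  "vsub a b = (\<lambda>i. a i - b i)"

definition vneg :: "pt \<Rightarrow> pt" where
  "vneg a = (\<lambda>i. - a i)"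

definition vle :: "pt \<Rightarrow> pt \<Rightarrow> bool" where
  "vle a b = (\<forall>i. a i \<le> b i)"

definition translate :: "pt set \<Rightarrow> pt \<Rightarrow> pt set" where
  "translate A b = (\<lambda>v. vadd v b) ` A"

text \<open>A monomial ideal is identified with the set of exponents of the monomials it contains
  (an up-closed subset of N^n).\<close>
definition monomial_ideal :: "nat \<Rightarrow> pt set \<Rightarrow> bool" where
  "monomial_ideal n I = (I \<subseteq> Nn n \<and> (\<forall>a\<in>I. \<forall>w\<in>Nn n. vadd a w \<in> I))"

definition young :: "nat \<Rightarrow> pt set \<Rightarrow> bool" where
  "young n lam = (finite lam \<and> lam \<subseteq> Nn n \<and> (\<forall>w\<in>lam. \<forall>v\<in>Nn n. vle v w \<longrightarrow> v \<in> lam))"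

text \<open>Young diagram corresponding to I: exponents of monomials not in I
  (finite iff dim_k S/I is finite).\<close>
definition young_of :: "nat \<Rightarrow> pt set \<Rightarrow> pt set" where
  "young_of n I = Nn n - I"

definition skew_of :: "pt set \<Rightarrow> pt set \<Rightarrow> pt set" where
  "skew_of K I = K - I"

definition skew_shape :: "nat \<Rightarrow> pt set \<Rightarrow> bool" where
  "skew_shape n nu = (\<exists>l1 l2. young n l1 \<and> young n l2 \<and> nu = l1 - l2)"

definition linked :: "nat \<Rightarrow> pt set \<Rightarrow> pt \<Rightarrow> pt \<Rightarrow> bool" where
  "linked n E a b = (\<exists>a'\<in>Nn n. \<exists>b'\<in>Nn n. vadd a a' = vadd b b' \<and> vadd a a' \<in> E)"

definition link_rel :: "nat \<Rightarrow> pt set \<Rightarrow> (pt \<times> pt) set" where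
  "link_rel n E = {(a, b). a \<in> E \<and> b \<in> E \<and> linked n E a b}"

definition connected_set :: "nat \<Rightarrow> pt set \<Rightarrow> bool" where
  "connected_set n E = (E \<noteq> {} \<and> E \<times> E \<subseteq> (link_rel n E)\<^sup>*)"

definition components :: "nat \<Rightarrow> pt set \<Rightarrow> pt set set" where
  "components n E = {(link_rel n E)\<^sup>* `` {a} | a. a \<in> E}"

definition lex_less :: "pt \<Rightarrow> pt \<Rightarrow> bool" where
  "lex_less a b = (\<exists>j. a j < b j \<and> (\<forall>i<j. a i = b i))"

definition lexmin :: "pt set \<Rightarrow> pt" where
  "lexmin E = (THE l. l \<in> E \<and> (\<forall>a\<in>E. a \<noteq> l \<longrightarrow> lex_less l a))"

definition abstract_skew_shape :: "nat \<Rightarrow> pt set \<Rightarrow> bool" where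
  "abstract_skew_shape n A =
     (\<exists>nu. skew_shape n nu \<and> nu \<noteq> {} \<and> A = translate nu (vneg (lexmin nu)))"

definition connected_abstract_skew_shape :: "nat \<Rightarrow> pt set \<Rightarrow> bool" where
  "connected_abstract_skew_shape n A =
     (\<exists>nu. skew_shape n nu \<and> connected_set n nu \<and> A = translate nu (vneg (lexmin nu)))"

text \<open>The S-module K/I (E = skew shape of K/I) is modelled via its k-basis of monomial
  classes: elements are coefficient functions supported on E; x^w acts by shifting,
  killing terms leaving E (they land in I).\<close>
definition qcarrier :: "pt set \<Rightarrow> (pt \<Rightarrow> 'k::field) set" where
  "qcarrier E = {f. \<forall>a. a \<notin> E \<longrightarrow> f a = 0}"

definition mact :: "pt set \<Rightarrow> pt \<Rightarrow> (pt \<Rightarrow> 'k::field) \<Rightarrow> (pt \<Rightarrow> 'k)" where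
  "mact E w f = (\<lambda>a. if a \<in> E \<and> vsub a w \<in> E then f (vsub a w) else 0)"

definition mon :: "pt \<Rightarrow> (pt \<Rightarrow> 'k::field)" where
  "mon a = (\<lambda>b. if b = a then 1 else 0)"

definition module_iso ::
  "nat \<Rightarrow> pt set \<Rightarrow> pt set \<Rightarrow> ((pt \<Rightarrow> 'k::field) \<Rightarrow> (pt \<Rightarrow> 'k)) \<Rightarrow> bool" where
  "module_iso n E F phi =
     (bij_betw phi (qcarrier E) (qcarrier F) \<and>
      (\<forall>f\<in>qcarrier E. \<forall>g\<in>qcarrier E. phi (\<lambda>a. f a + g a) = (\<lambda>a. phi f a + phi g a)) \<and>
      (\<forall>c. \<forall>f\<in>qcarrier E. phi (\<lambda>a. c * f a) = (\<lambda>a. c * phi f a)) \<and>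
      (\<forall>w\<in>Nn n. \<forall>f\<in>qcarrier E. phi (mact E w f) = mact F w (phi f)))"

definition sends_monomials ::
  "pt set \<Rightarrow> pt set \<Rightarrow> ((pt \<Rightarrow> 'k::field) \<Rightarrow> (pt \<Rightarrow> 'k)) \<Rightarrow> bool" where
  "sends_monomials E F phi = (\<forall>a\<in>E. \<exists>a'\<in>F. phi (mon a) = mon a')"

definition conds_abcd ::
  "nat \<Rightarrow> pt set \<Rightarrow> pt set \<Rightarrow> nat \<Rightarrow> (nat \<Rightarrow> pt set) \<Rightarrow> (nat \<Rightarrow> pt) \<Rightarrow> (nat \<Rightarrow> pt) \<Rightarrow> bool" where
  "conds_abcd n lam mu r nu b c =
    ((\<forall>i<r. \<forall>j<r. i \<noteq> j \<longrightarrow> translate (nu i) (b i) \<inter> translate (nu j) (b j) = {}) \<and>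
     (\<forall>i<r. translate (nu i) (b i) \<subseteq> lam) \<and>
     (\<forall>i<r. \<forall>w\<in>Nn n. \<forall>v\<in>nu i. vadd (vadd v (b i)) w \<in> lam \<longrightarrow> vadd v w \<in> nu i) \<and>
     (\<forall>i<r. \<forall>j<r. i \<noteq> j \<longrightarrow> translate (nu i) (c i) \<inter> translate (nu j) (c j) = {}) \<and>
     (\<forall>i<r. translate (nu i) (c i) \<subseteq> mu) \<and>
     (\<forall>i<r. \<forall>w\<in>Nn n. \<forall>v\<in>nu i. vadd (vadd v (c i)) w \<in> mu \<longrightarrow> vadd v w \<in> nu i))"

end

theory Submission
  imports Defs
begin


lemma vadd_assoc: "vadd (vadd a b) c = vadd a (vadd b c)"
  by (simp add: vadd_def fun_eq_iff add.assoc)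
lemma vadd_comm: "vadd a b = vadd b a"
  by (simp add: vadd_def fun_eq_iff add.commute)
lemma vsub_vadd[simp]: "vsub (vadd a b) b = a"
  by (simp add: vadd_def vsub_def fun_eq_iff)
lemma vadd_vsub[simp]: "vadd (vsub a b) b = a"
  by (simp add: vadd_def vsub_def fun_eq_iff)
lemma mem_translate: "x \<in> translate A t \<longleftrightarrow> vsub x t \<in> A"
  unfolding translate_def by (auto simp: image_iff) (metis vadd_vsub)
lemma vadd_in_translate: "v \<in> A \<Longrightarrow> vadd v t \<in> translate A t"
  by (simp add: mem_translate)
lemma translate_vneg[simp]: "translate (translate A (vneg l)) l = A"
  unfolding mem_translate set_eq_iff
  by (simp add: vsub_def vneg_def)

definition z0 :: pt where "z0 = (\<lambda>_. 0)"
lemma z0_Nn[simp]: "z0 \<in> Nn n" by (simp add: z0_def Nn_def Zn_def)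
lemma vadd_z0[simp]: "vadd a z0 = a" by (simp add: z0_def vadd_def)

lemma Nn_Zn: "a \<in> Nn n \<Longrightarrow> a \<in> Zn n" by (simp add: Nn_def)
lemma vadd_Nn: "a \<in> Nn n \<Longrightarrow> b \<in> Nn n \<Longrightarrow> vadd a b \<in> Nn n"
  by (simp add: Nn_def Zn_def vadd_def)
lemma vadd_Zn: "a \<in> Zn n \<Longrightarrow> b \<in> Zn n \<Longrightarrow> vadd a b \<in> Zn n"
  by (simp add: Zn_def vadd_def)
lemma vsub_Zn: "a \<in> Zn n \<Longrightarrow> b \<in> Zn n \<Longrightarrow> vsub a b \<in> Zn n"
  by (simp add: Zn_def vsub_def)
lemma vle_vsub_Nn: "vle y x \<Longrightarrow> x \<in> Nn n \<Longrightarrow> y \<in> Nn n \<Longrightarrow> vsub x y \<in> Nn n"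
  by (simp add: Nn_def Zn_def vsub_def vle_def)
lemma vle_vadd: "w \<in> Nn n \<Longrightarrow> vle a (vadd a w)"
  by (simp add: Nn_def vle_def vadd_def)
lemma vle_trans: "vle a b \<Longrightarrow> vle b c \<Longrightarrow> vle a c"
  unfolding vle_def by (meson order_trans)
lemma vle_refl: "vle a a" by (simp add: vle_def)

lemma lex_total: "a \<noteq> b \<Longrightarrow> lex_less a b \<or> lex_less b a"
proof -
  assume "a \<noteq> b"
  then obtain k where "a k \<noteq> b k" by (auto simp: fun_eq_iff)
  define j where "j = (LEAST j. a j \<noteq> b j)"
  have 1: "a j \<noteq> b j" unfolding j_def by (rule LeastI[of _ k]) fact
  have 2: "\<forall>i<j. a i = b i" unfolding j_def using not_less_Least by blast
  show ?thesis
  proof (cases "a j < b j")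
    case True then show ?thesis unfolding lex_less_def using 2 by blast
  next
    case False then have "b j < a j" using 1 by simp
    then show ?thesis unfolding lex_less_def using 2 by (intro disjI2 exI[of _ j]) simp
  qed
qed

lemma lex_asym: "lex_less a b \<Longrightarrow> \<not> lex_less b a"
proof
  assume "lex_less a b" "lex_less b a"
  then obtain j1 j2 where h: "a j1 < b j1" "\<forall>i<j1. a i = b i" "b j2 < a j2" "\<forall>i<j2. b i = a i"
    unfolding lex_less_def by blast
  show False
  proof (cases j1 j2 rule: linorder_cases)
    case less then have "b j1 = a j1" using h(4) by blast
    then show ?thesis using h(1) by simp
  next
    case equal then show ?thesis using h(1,3) by simp
  next
    case greater then have "a j2 = b j2" using h(2) by blast
    then show ?thesis using h(3) by simp
  qed
qed

lemma lex_trans: "lex_less a b \<Longrightarrow> lex_less b c \<Longrightarrow> lex_less a c"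
  unfolding lex_less_def
proof (elim exE conjE)
  fix j1 j2 assume h: "a j1 < b j1" "\<forall>i<j1. a i = b i" "b j2 < c j2" "\<forall>i<j2. b i = c i"
  show "\<exists>j. a j < c j \<and> (\<forall>i<j. a i = c i)"
  proof (cases "j1 < j2")
    case True then show ?thesis using h by (intro exI[of _ j1]) auto
  next
    case False
    show ?thesis
    proof (cases "j1 = j2")
      case True then show ?thesis using h by (intro exI[of _ j2]) auto
    next
      case False
      then have "j2 < j1" using \<open>\<not> j1 < j2\<close> by simp
      then show ?thesis using h by (intro exI[of _ j2]) auto
    qed
  qed
qed

lemma lex_min_ex: "finite E \<Longrightarrow> E \<noteq> {} \<Longrightarrow> \<exists>l\<in>E. \<forall>a\<in>E. a \<noteq> l \<longrightarrow> lex_less l a"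
proof (induction E rule: finite_ne_induct)
  case (singleton x) then show ?case by auto
next
  case (insert x F)
  then obtain m where m: "m \<in> F" "\<forall>a\<in>F. a \<noteq> m \<longrightarrow> lex_less m a" by auto
  have "x \<noteq> m" using m insert by auto
  show ?case
  proof (cases "lex_less x m")
    case True
    have "lex_less x a" if "a \<in> insert x F" "a \<noteq> x" for a
    proof -
      have "a \<in> F" using that by simp
      show ?thesis
      proof (cases "a = m")
        case True then show ?thesis using \<open>lex_less x m\<close> by simp
      next
        case False then have "lex_less m a" using m \<open>a \<in> F\<close> by blast
        then show ?thesis using lex_trans \<open>lex_less x m\<close> by blast
      qed
    qed
    then show ?thesis by blast
  next
    case False then have "lex_less m x" using lex_total \<open>x \<noteq> m\<close> by blast
    then show ?thesis using m by (intro bexI[of _ m]) blast+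
  qed
qed

lemma lexmin_in: assumes "finite E" "E \<noteq> {}" shows "lexmin E \<in> E"
proof -
  obtain l where l: "l \<in> E" "\<forall>a\<in>E. a \<noteq> l \<longrightarrow> lex_less l a" using lex_min_ex assms by blast
  have "\<exists>!l. l \<in> E \<and> (\<forall>a\<in>E. a \<noteq> l \<longrightarrow> lex_less l a)"
  proof (rule ex1I[of _ l])
    show "l \<in> E \<and> (\<forall>a\<in>E. a \<noteq> l \<longrightarrow> lex_less l a)" using l by blast
    fix y assume y: "y \<in> E \<and> (\<forall>a\<in>E. a \<noteq> y \<longrightarrow> lex_less y a)"
    show "y = l"
    proof (rule ccontr)
      assume "y \<noteq> l"
      then have "lex_less y l" "lex_less l y" using y l by auto
      then show False using lex_asym by blast
    qed
  qed
  then show ?thesis unfolding lexmin_def by (rule theI'[THEN conjunct1])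
qed

lemma linked_sym: "linked n E a b \<Longrightarrow> linked n E b a"
  unfolding linked_def by metis
lemma sym_link_rel: "sym (link_rel n E)"
  unfolding sym_def link_rel_def using linked_sym by blast
lemma rt_sym: "(a,b) \<in> (link_rel n E)\<^sup>* \<Longrightarrow> (b,a) \<in> (link_rel n E)\<^sup>*"
  using sym_rtrancl[OF sym_link_rel] unfolding sym_def by blast
lemma link_rel_in: "(a,b) \<in> link_rel n E \<Longrightarrow> a \<in> E \<and> b \<in> E"
  unfolding link_rel_def by auto
lemma rt_in: "(a,b) \<in> (link_rel n E)\<^sup>* \<Longrightarrow> a \<in> E \<Longrightarrow> b \<in> E"
  by (induction rule: rtrancl_induct) (auto dest: link_rel_in)

lemma comp_eq: "x \<in> (link_rel n E)\<^sup>* `` {a} \<Longrightarrow> (link_rel n E)\<^sup>* `` {x} = (link_rel n E)\<^sup>* `` {a}"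
proof -
  assume "x \<in> (link_rel n E)\<^sup>* `` {a}"
  then have 1: "(a,x) \<in> (link_rel n E)\<^sup>*" "(x,a) \<in> (link_rel n E)\<^sup>*" using rt_sym by auto
  show ?thesis
  proof
    show "(link_rel n E)\<^sup>* `` {x} \<subseteq> (link_rel n E)\<^sup>* `` {a}" using 1(1) by (auto intro: rtrancl_trans)
    show "(link_rel n E)\<^sup>* `` {a} \<subseteq> (link_rel n E)\<^sup>* `` {x}" using 1(2) by (auto intro: rtrancl_trans)
  qed
qed
lemma comp_sub: "C \<in> components n E \<Longrightarrow> C \<subseteq> E"
  unfolding components_def using rt_in by fastforce
lemma comp_disj: "C1 \<in> components n E \<Longrightarrow> C2 \<in> components n E \<Longrightarrow> C1 \<noteq> C2 \<Longrightarrow> C1 \<inter> C2 = {}"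
  unfolding components_def using comp_eq by blast
lemma comp_of: "C \<in> components n E \<Longrightarrow> x \<in> C \<Longrightarrow> C = (link_rel n E)\<^sup>* `` {x}"
  unfolding components_def using comp_eq by blast
lemma comp_self: "x \<in> E \<Longrightarrow> x \<in> (link_rel n E)\<^sup>* `` {x}" by auto




lemma linked_up: "a \<in> E \<Longrightarrow> w \<in> Nn n \<Longrightarrow> vadd a w \<in> E \<Longrightarrow> (a, vadd a w) \<in> link_rel n E"
proof -
  assume h: "a \<in> E" "w \<in> Nn n" "vadd a w \<in> E"
  have "vadd a w = vadd (vadd a w) z0" by simp
  then have "linked n E a (vadd a w)" unfolding linked_def using h z0_Nn by blast
  then show ?thesis unfolding link_rel_def using h by blast
qed

lemma link_comp: assumes C: "C \<in> components n E" and p: "p \<in> C" and pq: "(p,q) \<in> link_rel n E"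
  shows "(p,q) \<in> link_rel n C"
proof -
  have Cp: "C = (link_rel n E)\<^sup>* `` {p}" using comp_of C p by blast
  have qC: "q \<in> C" using Cp pq by auto
  obtain a' b' where ab: "a' \<in> Nn n" "b' \<in> Nn n" "vadd p a' = vadd q b'" "vadd p a' \<in> E"
    using pq unfolding link_rel_def linked_def by blast
  have pE: "p \<in> E" using pq link_rel_in by blast
  have "(p, vadd p a') \<in> link_rel n E" using linked_up[OF pE ab(1) ab(4)] .
  then have "vadd p a' \<in> C" using Cp by auto
  then show ?thesis using ab p qC unfolding link_rel_def linked_def by blast
qed

lemma rt_comp: assumes C: "C \<in> components n E"
  shows "(p,q) \<in> (link_rel n E)\<^sup>* \<Longrightarrow> p \<in> C \<Longrightarrow> (p,q) \<in> (link_rel n C)\<^sup>* \<and> q \<in> C"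
proof (induction rule: rtrancl_induct)
  case base then show ?case by simp
next
  case (step y z)
  then have "(y,z) \<in> link_rel n C" using link_comp[OF C] by blast
  then show ?case using step.IH step.prems link_rel_in[of y z n C] by (simp add: rtrancl.rtrancl_into_rtrancl)
qed

lemma comp_connected: assumes C: "C \<in> components n E" shows "connected_set n C"
proof -
  obtain a where a: "a \<in> E" "C = (link_rel n E)\<^sup>* `` {a}" using C unfolding components_def by blast
  have "C \<noteq> {}" using a by auto
  moreover have "C \<times> C \<subseteq> (link_rel n C)\<^sup>*"
  proof clarify
    fix p q assume "p \<in> C" "q \<in> C"
    then have "(a,p) \<in> (link_rel n E)\<^sup>*" "(a,q) \<in> (link_rel n E)\<^sup>*" using a by auto
    then have "(p,a) \<in> (link_rel n E)\<^sup>*" "(a,q) \<in> (link_rel n E)\<^sup>*" using rt_sym by auto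
    then have "(p,q) \<in> (link_rel n E)\<^sup>*" by (rule rtrancl_trans)
    then show "(p,q) \<in> (link_rel n C)\<^sup>*" using rt_comp[OF C] \<open>p \<in> C\<close> by blast
  qed
  ultimately show ?thesis unfolding connected_set_def by blast
qed

lemma young_of_down: assumes "monomial_ideal n I" "x \<in> young_of n I" "y \<in> Nn n" "vle y x"
  shows "y \<in> young_of n I"
proof -
  have xN: "x \<in> Nn n" using assms(2) by (simp add: young_of_def)
  have d: "vsub x y \<in> Nn n" using vle_vsub_Nn assms(4) xN assms(3) .
  have "y \<notin> I"
  proof
    assume "y \<in> I"
    then have "vadd y (vsub x y) \<in> I" using assms(1) d unfolding monomial_ideal_def by blast
    moreover have "vadd y (vsub x y) = x" by (simp add: vadd_def vsub_def)
    ultimately show False using assms(2) by (simp add: young_of_def)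
  qed
  then show ?thesis using assms(3) by (simp add: young_of_def)
qed

lemma skew_sub_young: "monomial_ideal n K \<Longrightarrow> skew_of K I \<subseteq> young_of n I"
  unfolding skew_of_def young_of_def monomial_ideal_def by blast

lemma comp_closure:
  assumes K: "monomial_ideal n K" and C: "C \<in> components n (skew_of K I)" and x: "x \<in> C"
    and w: "w \<in> Nn n" and xw: "vadd x w \<in> young_of n I"
  shows "vadd x w \<in> C"
proof -
  have xE: "x \<in> K - I" using comp_sub[OF C] x by (auto simp: skew_of_def)
  have "vadd x w \<in> K" using K xE w unfolding monomial_ideal_def by blast
  then have "vadd x w \<in> skew_of K I" using xw by (simp add: skew_of_def young_of_def)
  then have "(x, vadd x w) \<in> link_rel n (skew_of K I)" using linked_up xE w by (simp add: skew_of_def)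
  moreover have "C = (link_rel n (skew_of K I))\<^sup>* `` {x}" using comp_of C x by blast
  ultimately show ?thesis by auto
qed

lemma comp_skew:
  assumes I: "monomial_ideal n I" and K: "monomial_ideal n K" and fin: "finite (young_of n I)"
    and C: "C \<in> components n (skew_of K I)"
  shows "skew_shape n C"
proof -
  have CY: "C \<subseteq> young_of n I" using comp_sub[OF C] skew_sub_young[OF K] by blast
  have CN: "C \<subseteq> Nn n" using CY by (auto simp: young_of_def)
  define l1 where "l1 = {y \<in> Nn n. \<exists>z\<in>C. vle y z}"
  define l2 where "l2 = l1 - C"
  have l1Y: "l1 \<subseteq> young_of n I"
  proof
    fix y assume "y \<in> l1"
    then obtain z where "y \<in> Nn n" "z \<in> C" "vle y z" unfolding l1_def by blast
    then show "y \<in> young_of n I" using young_of_down[OF I, of z y] CY by blast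
  qed
  have y1: "young n l1" unfolding young_def
  proof (intro conjI)
    show "finite l1" using l1Y fin finite_subset by blast
    show "l1 \<subseteq> Nn n" unfolding l1_def by blast
    show "\<forall>w\<in>l1. \<forall>v\<in>Nn n. vle v w \<longrightarrow> v \<in> l1"
    proof (intro ballI impI)
      fix w v assume "w \<in> l1" "v \<in> Nn n" "vle v w"
      then obtain z where "z \<in> C" "vle w z" unfolding l1_def by blast
      then show "v \<in> l1" unfolding l1_def using \<open>v \<in> Nn n\<close> vle_trans[OF \<open>vle v w\<close>] by blast
    qed
  qed
  have y2: "young n l2" unfolding young_def
  proof (intro conjI)
    show "finite l2" using y1 unfolding l2_def young_def by simp
    show "l2 \<subseteq> Nn n" unfolding l2_def l1_def by auto
    show "\<forall>w\<in>l2. \<forall>v\<in>Nn n. vle v w \<longrightarrow> v \<in> l2"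
    proof (intro ballI impI)
      fix x y assume x: "x \<in> l2" and y: "y \<in> Nn n" and yx: "vle y x"
      have yl1: "y \<in> l1"
      proof -
        obtain z where "z \<in> C" "vle x z" using x unfolding l2_def l1_def by blast
        then show ?thesis unfolding l1_def using y vle_trans[OF yx] by blast
      qed
      show "y \<in> l2"
      proof (rule ccontr)
        assume "y \<notin> l2"
        then have yC: "y \<in> C" using yl1 l2_def by blast
        have xN: "x \<in> Nn n" using x unfolding l2_def l1_def by blast
        have d: "vsub x y \<in> Nn n" using vle_vsub_Nn yx xN y .
        have eq: "vadd y (vsub x y) = x" by (simp add: vadd_def vsub_def)
        have "x \<in> l1" using x unfolding l2_def by simp
        then have "x \<in> young_of n I" using l1Y by blast
        then have "vadd y (vsub x y) \<in> C" using comp_closure[OF K C yC d] eq by simp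
        then have "x \<in> C" using eq by simp
        then show False using x unfolding l2_def by simp
      qed
    qed
  qed
  have "C \<subseteq> l1" unfolding l1_def using CN vle_refl by blast
  then have "C = l1 - l2" unfolding l2_def by blast
  then show ?thesis unfolding skew_shape_def using y1 y2 by blast
qed

lemma finite_skew: "monomial_ideal n K \<Longrightarrow> finite (young_of n I) \<Longrightarrow> finite (skew_of K I)"
  by (rule finite_subset[OF skew_sub_young])

lemma finite_components: "finite E \<Longrightarrow> finite (components n E)"
proof -
  assume "finite E"
  have "components n E \<subseteq> Pow E" using comp_sub by auto
  moreover have "finite (Pow E)" using \<open>finite E\<close> by simp
  ultimately show ?thesis by (rule finite_subset)
qed

lemma comp_nonempty: "C \<in> components n E \<Longrightarrow> C \<noteq> {}"
  unfolding components_def by auto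




lemma vsub_eq_iff: "vsub x w = a \<longleftrightarrow> x = vadd a w"
  by (metis vadd_vsub vsub_vadd)
lemma vsub_cancel: "vsub (vadd x w) (vadd y w) = vsub x y"
  by (simp add: vsub_def vadd_def fun_eq_iff)
lemma vadd_vsub2: "vadd x (vsub y x) = y"
  by (simp add: vsub_def vadd_def fun_eq_iff)
lemma translate_translate: "translate (translate A s) t = translate A (vadd s t)"
  unfolding translate_def image_image by (simp add: vadd_assoc)
lemma vneg_vadd: "vadd (vneg b) y = vsub y b"
  by (simp add: vsub_def vadd_def vneg_def fun_eq_iff)

lemma mon_app: "mon a a = (1::'k::field)" by (simp add: mon_def)
lemma mon_ne0: "mon a \<noteq> (\<lambda>_. 0::'k::field)"
  by (metis mon_app one_neq_zero)
lemma mon_inj: "mon a = (mon b :: pt \<Rightarrow> 'k::field) \<Longrightarrow> a = b"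
  by (metis mon_app mon_def one_neq_zero)
lemma mon_q: "a \<in> X \<Longrightarrow> (mon a :: pt \<Rightarrow> 'k::field) \<in> qcarrier X"
  by (auto simp: qcarrier_def mon_def)
lemma mact_mon: "a \<in> X \<Longrightarrow> mact X w (mon a :: pt \<Rightarrow> 'k::field) =
   (if vadd a w \<in> X then mon (vadd a w) else (\<lambda>_. 0))"
  unfolding mact_def mon_def by (rule ext) (auto simp: vsub_eq_iff)

locale P1 =
  fixes n :: nat and K I L J :: "pt set" and phi :: "(pt \<Rightarrow> 'k::field) \<Rightarrow> pt \<Rightarrow> 'k"
  assumes I: "monomial_ideal n I" and K: "monomial_ideal n K" and IK: "I \<subseteq> K"
    and J: "monomial_ideal n J" and L: "monomial_ideal n L" and JL: "J \<subseteq> L"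
    and finI: "finite (young_of n I)" and finJ: "finite (young_of n J)"
    and iso: "module_iso n (skew_of K I) (skew_of L J) phi"
    and sm: "sends_monomials (skew_of K I) (skew_of L J) phi"
begin

abbreviation "E \<equiv> skew_of K I"
abbreviation "F \<equiv> skew_of L J"

definition sig :: "pt \<Rightarrow> pt" where
  "sig a = (SOME a'. a' \<in> F \<and> phi (mon a) = mon a')"

definition d :: "pt \<Rightarrow> pt" where "d a = vsub (sig a) a"

lemma sig_prop: "a \<in> E \<Longrightarrow> sig a \<in> F \<and> phi (mon a) = mon (sig a)"
proof -
  assume a: "a \<in> E"
  then obtain a' where "a' \<in> F \<and> phi (mon a) = mon a'" using sm unfolding sends_monomials_def by blast
  then show ?thesis unfolding sig_def by (rule someI[where P="\<lambda>a'. a' \<in> F \<and> phi (mon a) = mon a'"])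
qed

lemma phi_add: "f \<in> qcarrier E \<Longrightarrow> g \<in> qcarrier E \<Longrightarrow> phi (\<lambda>a. f a + g a) = (\<lambda>a. phi f a + phi g a)"
  using iso unfolding module_iso_def by blast
lemma phi_smul: "f \<in> qcarrier E \<Longrightarrow> phi (\<lambda>a. c * f a) = (\<lambda>a. c * phi f a)"
  using iso unfolding module_iso_def by blast
lemma phi_mact: "w \<in> Nn n \<Longrightarrow> f \<in> qcarrier E \<Longrightarrow> phi (mact E w f) = mact F w (phi f)"
  using iso unfolding module_iso_def by blast
lemma phi_bij: "bij_betw phi (qcarrier E) (qcarrier F)"
  using iso unfolding module_iso_def by blast

lemma zero_q: "(\<lambda>_. 0) \<in> qcarrier X" by (simp add: qcarrier_def)

lemma phi0: "phi (\<lambda>_. 0) = (\<lambda>_. 0)"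
  using phi_smul[OF zero_q, of 0] by simp

lemma shift:
  assumes a: "a \<in> E" and w: "w \<in> Nn n"
  shows "(vadd a w \<in> E \<longleftrightarrow> vadd (sig a) w \<in> F) \<and> (vadd a w \<in> E \<longrightarrow> sig (vadd a w) = vadd (sig a) w)"
proof -
  have sa: "sig a \<in> F" "phi (mon a) = mon (sig a)" using sig_prop a by auto
  have eq: "phi (mact E w (mon a)) = mact F w (mon (sig a))"
    using phi_mact[OF w mon_q[OF a]] sa by simp
  show ?thesis
  proof (cases "vadd a w \<in> E")
    case True
    have s2: "phi (mon (vadd a w)) = mon (sig (vadd a w))" using sig_prop True by auto
    have h1: "mact E w (mon a) = (mon (vadd a w) :: pt \<Rightarrow> 'k)" using mact_mon[OF a, of w] True by simp
    have "mon (sig (vadd a w)) = phi (mact E w (mon a))" by (simp only: h1 s2)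
    also have "\<dots> = mact F w (mon (sig a))" by (rule eq)
    also have "\<dots> = (if vadd (sig a) w \<in> F then mon (vadd (sig a) w) else (\<lambda>_. 0))" by (rule mact_mon[OF sa(1)])
    finally have m: "mon (sig (vadd a w)) = (if vadd (sig a) w \<in> F then mon (vadd (sig a) w) else (\<lambda>_. 0::'k))" .
    have "vadd (sig a) w \<in> F"
    proof (rule ccontr)
      assume "vadd (sig a) w \<notin> F"
      then have "mon (sig (vadd a w)) = (\<lambda>_. 0::'k)" using m by simp
      then show False using mon_ne0 by blast
    qed
    then have "vadd (sig a) w \<in> F \<and> sig (vadd a w) = vadd (sig a) w"
      using m mon_inj by auto
    then show ?thesis using True by simp
  next
    case False
    have h1: "mact E w (mon a) = (\<lambda>_. 0::'k)" using mact_mon[OF a, of w] False by simp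
    have "(\<lambda>_. 0) = phi (mact E w (mon a))" by (simp only: h1 phi0)
    also have "\<dots> = mact F w (mon (sig a))" by (rule eq)
    also have "\<dots> = (if vadd (sig a) w \<in> F then mon (vadd (sig a) w) else (\<lambda>_. 0))" by (rule mact_mon[OF sa(1)])
    finally have m: "(\<lambda>_. 0) = (if vadd (sig a) w \<in> F then mon (vadd (sig a) w) else (\<lambda>_. 0::'k))" .
    have "vadd (sig a) w \<notin> F"
    proof
      assume "vadd (sig a) w \<in> F"
      then have "mon (vadd (sig a) w) = (\<lambda>_. 0::'k)" using m by simp
      then show False using mon_ne0 by blast
    qed
    then show ?thesis using False by simp
  qed
qed

lemma sig_inj: "inj_on sig E"
proof (rule inj_onI)
  fix a b assume "a \<in> E" "b \<in> E" "sig a = sig b"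
  then have "phi (mon a) = phi (mon b)" using sig_prop by metis
  moreover have "inj_on phi (qcarrier E)" using phi_bij bij_betw_def by blast
  ultimately have "mon a = (mon b :: pt \<Rightarrow> 'k)" using mon_q \<open>a \<in> E\<close> \<open>b \<in> E\<close> inj_on_def by metis
  then show "a = b" by (rule mon_inj)
qed

lemma finE: "finite E" using finite_skew[OF K finI] .
lemma finF: "finite F" using finite_skew[OF L finJ] .

lemma phi_sum: "finite A \<Longrightarrow> A \<subseteq> E \<Longrightarrow>
  phi (\<lambda>x. \<Sum>a\<in>A. g a * mon a x) = (\<lambda>x. \<Sum>a\<in>A. g a * mon (sig a) x)"
proof (induction A rule: finite_induct)
  case empty then show ?case using phi0 by simp
next
  case (insert a A)
  have aE: "a \<in> E" using insert by simp
  have q1: "(\<lambda>x. g a * mon a x) \<in> qcarrier E" using aE by (auto simp: qcarrier_def mon_def)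
  have q2: "(\<lambda>x. \<Sum>b\<in>A. g b * mon b x) \<in> qcarrier E"
    using insert.prems by (auto simp: qcarrier_def mon_def intro!: sum.neutral)
  have "phi (\<lambda>x. \<Sum>b\<in>insert a A. g b * mon b x) = phi (\<lambda>x. g a * mon a x + (\<Sum>b\<in>A. g b * mon b x))"
    using insert.hyps by simp
  also have "\<dots> = (\<lambda>x. phi (\<lambda>x. g a * mon a x) x + phi (\<lambda>x. \<Sum>b\<in>A. g b * mon b x) x)"
    by (rule phi_add[OF q1 q2])
  also have "\<dots> = (\<lambda>x. g a * mon (sig a) x + (\<Sum>b\<in>A. g b * mon (sig b) x))"
    using phi_smul[OF mon_q[OF aE], of "g a"] sig_prop[OF aE] insert.IH insert.prems by simp
  also have "\<dots> = (\<lambda>x. \<Sum>b\<in>insert a A. g b * mon (sig b) x)" using insert.hyps by simp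
  finally show ?case .
qed

lemma sig_surj: "sig ` E = F"
proof
  show "sig ` E \<subseteq> F" using sig_prop by auto
  show "F \<subseteq> sig ` E"
  proof
    fix y assume y: "y \<in> F"
    have "mon y \<in> qcarrier F" using mon_q[OF y] .
    then obtain f where f: "f \<in> qcarrier E" "phi f = mon y"
      using phi_bij unfolding bij_betw_def by (metis imageE)
    have fe: "f = (\<lambda>x. \<Sum>a\<in>E. f a * mon a x)"
    proof
      fix x
      have "(\<Sum>a\<in>E. f a * mon a x) = (\<Sum>a\<in>E. if x = a then f a else 0)"
        by (rule sum.cong) (auto simp: mon_def)
      also have "\<dots> = (if x \<in> E then f x else 0)" using finE by (simp add: sum.delta)
      also have "\<dots> = f x" using f(1) by (auto simp: qcarrier_def)
      finally show "f x = (\<Sum>a\<in>E. f a * mon a x)" by simp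
    qed
    show "y \<in> sig ` E"
    proof (rule ccontr)
      assume ny: "y \<notin> sig ` E"
      have "mon y = (\<lambda>x. \<Sum>a\<in>E. f a * mon (sig a) x)"
        using f(2) fe phi_sum[OF finE, of f] by simp
      then have "mon y y = (\<Sum>a\<in>E. f a * mon (sig a) y)" by metis
      also have "\<dots> = 0" using ny by (auto simp: mon_def intro!: sum.neutral)
      finally show False by (simp add: mon_def)
    qed
  qed
qed

end



context P1 begin

lemma EN: "x \<in> E \<Longrightarrow> x \<in> Nn n"
  using K unfolding skew_of_def monomial_ideal_def by blast

lemma link_fwd: assumes ab: "(a,b) \<in> link_rel n E"
  shows "(sig a, sig b) \<in> link_rel n F \<and> d a = d b"
proof -
  have aE: "a \<in> E" and bE: "b \<in> E" using ab link_rel_in by blast+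
  obtain a' b' where h: "a' \<in> Nn n" "b' \<in> Nn n" "vadd a a' = vadd b b'" "vadd a a' \<in> E"
    using ab unfolding link_rel_def linked_def by blast
  have s1: "vadd (sig a) a' \<in> F" "sig (vadd a a') = vadd (sig a) a'" using shift[OF aE h(1)] h(4) by auto
  have s2: "vadd (sig b) b' \<in> F" "sig (vadd b b') = vadd (sig b) b'" using shift[OF bE h(2)] h(3,4) by auto
  have eq: "vadd (sig a) a' = vadd (sig b) b'" using s1(2) s2(2) h(3) by simp
  have "linked n F (sig a) (sig b)" unfolding linked_def using h(1,2) eq s1(1) by blast
  then have 1: "(sig a, sig b) \<in> link_rel n F" unfolding link_rel_def using sig_prop aE bE by blast
  have "d a = vsub (vadd (sig a) a') (vadd a a')" unfolding d_def by (simp add: vsub_cancel)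
  also have "\<dots> = vsub (vadd (sig b) b') (vadd b b')" using eq h(3) by simp
  also have "\<dots> = d b" unfolding d_def by (simp add: vsub_cancel)
  finally show ?thesis using 1 by simp
qed

lemma link_bwd: assumes aE: "a \<in> E" and bE: "b \<in> E" and ab: "(sig a, sig b) \<in> link_rel n F"
  shows "(a,b) \<in> link_rel n E"
proof -
  obtain a' b' where h: "a' \<in> Nn n" "b' \<in> Nn n" "vadd (sig a) a' = vadd (sig b) b'" "vadd (sig a) a' \<in> F"
    using ab unfolding link_rel_def linked_def by blast
  have s1: "vadd a a' \<in> E" "sig (vadd a a') = vadd (sig a) a'" using shift[OF aE h(1)] h(4) by auto
  have s2: "vadd b b' \<in> E" "sig (vadd b b') = vadd (sig b) b'" using shift[OF bE h(2)] h(3,4) by auto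
  have "vadd a a' = vadd b b'" using sig_inj s1 s2 h(3) unfolding inj_on_def by metis
  then have "linked n E a b" unfolding linked_def using h(1,2) s1(1) by blast
  then show ?thesis unfolding link_rel_def using aE bE by blast
qed

lemma rt_fwd: "(a,b) \<in> (link_rel n E)\<^sup>* \<Longrightarrow> (sig a, sig b) \<in> (link_rel n F)\<^sup>* \<and> d a = d b"
proof (induction rule: rtrancl_induct)
  case base then show ?case by simp
next
  case (step y z)
  then show ?case using link_fwd[OF step(2)] by (auto intro: rtrancl_into_rtrancl)
qed

lemma rt_bwd: "(y,z) \<in> (link_rel n F)\<^sup>* \<Longrightarrow> a \<in> E \<Longrightarrow> y = sig a \<Longrightarrow> \<exists>b\<in>E. z = sig b \<and> (a,b) \<in> (link_rel n E)\<^sup>*"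
proof (induction rule: rtrancl_induct)
  case base then show ?case by blast
next
  case (step z z')
  then obtain b where b: "b \<in> E" "z = sig b" "(a,b) \<in> (link_rel n E)\<^sup>*" by blast
  have "z' \<in> F" using step(2) link_rel_in by blast
  then obtain b' where b': "b' \<in> E" "z' = sig b'" using sig_surj by blast
  have "(b,b') \<in> link_rel n E" using link_bwd[OF b(1) b'(1)] step(2) b(2) b'(2) by simp
  then show ?case using b b' by (blast intro: rtrancl_into_rtrancl)
qed

lemma class_image: assumes aE: "a \<in> E"
  shows "(link_rel n F)\<^sup>* `` {sig a} = translate ((link_rel n E)\<^sup>* `` {a}) (d a)"
proof -
  have 1: "(link_rel n F)\<^sup>* `` {sig a} = sig ` ((link_rel n E)\<^sup>* `` {a})"
  proof
    show "(link_rel n F)\<^sup>* `` {sig a} \<subseteq> sig ` ((link_rel n E)\<^sup>* `` {a})"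
      using rt_bwd aE by blast
    show "sig ` ((link_rel n E)\<^sup>* `` {a}) \<subseteq> (link_rel n F)\<^sup>* `` {sig a}"
      using rt_fwd by blast
  qed
  have 2: "sig ` ((link_rel n E)\<^sup>* `` {a}) = translate ((link_rel n E)\<^sup>* `` {a}) (d a)"
    unfolding translate_def
  proof (rule image_cong[OF refl])
    fix x assume "x \<in> (link_rel n E)\<^sup>* `` {a}"
    then have "d x = d a" using rt_fwd by auto
    then show "sig x = vadd x (d a)" unfolding d_def by (metis vadd_vsub2)
  qed
  show ?thesis using 1 2 by simp
qed

end



lemma vadd_sub_shift: "vadd (vadd v b) (vsub s b) = vadd v s"
  by (simp add: vadd_def vsub_def fun_eq_iff)
lemma vsub_shift2: "vsub (vadd (vadd v t) w) t = vadd v w"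
  by (simp add: vadd_def vsub_def fun_eq_iff)

lemma closure_tr:
  assumes "translate A t = C" "\<And>x w. x \<in> C \<Longrightarrow> w \<in> Nn n \<Longrightarrow> vadd x w \<in> Y \<Longrightarrow> vadd x w \<in> C"
  shows "\<forall>w\<in>Nn n. \<forall>v\<in>A. vadd (vadd v t) w \<in> Y \<longrightarrow> vadd v w \<in> A"
proof (intro ballI impI)
  fix w v assume w: "w \<in> Nn n" and v: "v \<in> A" and Y: "vadd (vadd v t) w \<in> Y"
  have "vadd v t \<in> C" using assms(1) vadd_in_translate[OF v] by blast
  then have "vadd (vadd v t) w \<in> translate A t" using assms w Y by blast
  then show "vadd v w \<in> A" unfolding mem_translate vsub_shift2 .
qed

context P1 begin

lemma FN: "x \<in> F \<Longrightarrow> x \<in> Nn n"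
  using L unfolding skew_of_def monomial_ideal_def by blast

lemma part1: "\<exists>r nu b c.
         (\<forall>i<r. connected_abstract_skew_shape n (nu i) \<and> b i \<in> Zn n \<and> c i \<in> Zn n) \<and>
         components n E = {translate (nu i) (b i) | i. i < r} \<and>
         components n F = {translate (nu i) (c i) | i. i < r} \<and>
         (\<forall>i<r. \<forall>v\<in>nu i. phi (mon (vadd v (b i))) = mon (vadd v (c i))) \<and>
         conds_abcd n (young_of n I) (young_of n J) r nu b c"
proof -
  define CE where "CE = components n E"
  have finCE: "finite CE" unfolding CE_def using finite_components[OF finE] .
  define r where "r = card CE"
  obtain h where h: "bij_betw h {0..<r} CE" unfolding r_def using ex_bij_betw_nat_finite[OF finCE] by blast
  define b where "b i = lexmin (h i)" for i
  define nu where "nu i = translate (h i) (vneg (b i))" for i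
  define c where "c i = sig (b i)" for i
  have himg: "h ` {0..<r} = CE" using h by (simp add: bij_betw_def)
  have hC: "h i \<in> CE" if "i < r" for i
  proof -
    have "h i \<in> h ` {0..<r}" using that by simp
    then show ?thesis using himg by simp
  qed
  have hE: "h i \<subseteq> E" if "i < r" for i using hC[OF that] comp_sub unfolding CE_def by blast
  have bi: "b i \<in> h i" if "i < r" for i
    unfolding b_def
  proof (rule lexmin_in)
    show "finite (h i)" using hE[OF that] finE by (rule finite_subset)
    show "h i \<noteq> {}" using hC[OF that] comp_nonempty unfolding CE_def by blast
  qed
  have bE: "b i \<in> E" if "i < r" for i using bi[OF that] hE[OF that] by blast
  have hcl: "h i = (link_rel n E)\<^sup>* `` {b i}" if "i < r" for i
    using comp_of hC[OF that] bi[OF that] unfolding CE_def by blast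
  have tb: "translate (nu i) (b i) = h i" for i unfolding nu_def by simp
  have tc: "translate (nu i) (c i) = (link_rel n F)\<^sup>* `` {sig (b i)}" if "i < r" for i
  proof -
    have "translate (nu i) (c i) = translate (h i) (d (b i))"
      unfolding nu_def c_def translate_translate vneg_vadd d_def ..
    also have "\<dots> = (link_rel n F)\<^sup>* `` {sig (b i)}"
      using class_image[OF bE[OF that]] hcl[OF that] by simp
    finally show ?thesis .
  qed
  have tcF: "translate (nu i) (c i) \<in> components n F" if "i < r" for i
    unfolding tc[OF that] components_def using sig_prop[OF bE[OF that]] by blast
  have compE: "components n E = {translate (nu i) (b i) | i. i < r}"
  proof -
    have "{translate (nu i) (b i) | i. i < r} = h ` {0..<r}" unfolding tb by auto
    also have "\<dots> = CE" by (rule himg)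
    finally show ?thesis unfolding CE_def by simp
  qed
  have compF: "components n F = {translate (nu i) (c i) | i. i < r}"
  proof
    show "{translate (nu i) (c i) | i. i < r} \<subseteq> components n F" using tcF by blast
    show "components n F \<subseteq> {translate (nu i) (c i) | i. i < r}"
    proof
      fix C' assume "C' \<in> components n F"
      then obtain y where y: "y \<in> F" "C' = (link_rel n F)\<^sup>* `` {y}" unfolding components_def by blast
      then obtain a where a: "a \<in> E" "y = sig a" using sig_surj by blast
      have "(link_rel n E)\<^sup>* `` {a} \<in> CE" unfolding CE_def components_def using a by blast
      then obtain i where i: "i < r" "h i = (link_rel n E)\<^sup>* `` {a}"
        using h unfolding bij_betw_def by (metis atLeastLessThan_iff imageE)
      then have "(a, b i) \<in> (link_rel n E)\<^sup>*" using bi by blast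
      then have "(sig a, sig (b i)) \<in> (link_rel n F)\<^sup>*" using rt_fwd by blast
      then have "sig (b i) \<in> (link_rel n F)\<^sup>* `` {sig a}" by blast
      then have "C' = (link_rel n F)\<^sup>* `` {sig (b i)}" using y a comp_eq by metis
      then show "C' \<in> {translate (nu i) (c i) | i. i < r}" using tc i by blast
    qed
  qed
  have csk: "connected_abstract_skew_shape n (nu i)" if "i < r" for i
  proof -
    have "h i \<in> components n E" using hC[OF that] unfolding CE_def .
    then have "skew_shape n (h i)" "connected_set n (h i)" using comp_skew[OF I K finI] comp_connected by auto
    moreover have "nu i = translate (h i) (vneg (lexmin (h i)))" unfolding nu_def b_def ..
    ultimately show ?thesis unfolding connected_abstract_skew_shape_def by blast
  qed
  have Zb: "b i \<in> Zn n" if "i < r" for i using EN[OF bE[OF that]] Nn_Zn by blast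
  have Zc: "c i \<in> Zn n" if "i < r" for i using FN sig_prop[OF bE[OF that]] Nn_Zn unfolding c_def by blast
  have phim: "phi (mon (vadd v (b i))) = mon (vadd v (c i))" if "i < r" "v \<in> nu i" for i v
  proof -
    have x: "vadd v (b i) \<in> h i" using vadd_in_translate[OF that(2), of "b i"] tb[of i] by simp
    then have "(b i, vadd v (b i)) \<in> (link_rel n E)\<^sup>*" using hcl[OF that(1)] by blast
    then have dd: "d (vadd v (b i)) = d (b i)" using rt_fwd by simp
    have "phi (mon (vadd v (b i))) = mon (sig (vadd v (b i)))" using sig_prop x hE[OF that(1)] by blast
    also have "sig (vadd v (b i)) = vadd (vadd v (b i)) (d (vadd v (b i)))" unfolding d_def by (simp add: vadd_vsub2)
    also have "\<dots> = vadd (vadd v (b i)) (d (b i))" using dd by simp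
    also have "\<dots> = vadd v (c i)" unfolding d_def c_def by (rule vadd_sub_shift)
    finally show ?thesis .
  qed
  have ca1: "translate (nu i) (b i) \<inter> translate (nu j) (b j) = {}" if "i < r" "j < r" "i \<noteq> j" for i j
  proof -
    have "h i \<noteq> h j" using h that unfolding bij_betw_def inj_on_def by auto
    then show ?thesis unfolding tb using comp_disj hC that unfolding CE_def by blast
  qed
  have ca2: "translate (nu i) (b i) \<subseteq> young_of n I" if "i < r" for i
    unfolding tb using hE[OF that] skew_sub_young[OF K] by blast
  have cb: "\<forall>w\<in>Nn n. \<forall>v\<in>nu i. vadd (vadd v (b i)) w \<in> young_of n I \<longrightarrow> vadd v w \<in> nu i" if "i < r" for i
    by (rule closure_tr[OF tb]) (rule comp_closure[OF K hC[OF that, unfolded CE_def]])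
  have cc1: "translate (nu i) (c i) \<inter> translate (nu j) (c j) = {}" if "i < r" "j < r" "i \<noteq> j" for i j
  proof -
    have biE: "b i \<in> E" using bE that(1) by blast
    have "translate (nu i) (c i) \<noteq> translate (nu j) (c j)"
    proof
      assume "translate (nu i) (c i) = translate (nu j) (c j)"
      then have "sig (b j) \<in> (link_rel n F)\<^sup>* `` {sig (b i)}" using tc that by auto
      then obtain b' where b': "b' \<in> E" "sig (b j) = sig b'" "(b i, b') \<in> (link_rel n E)\<^sup>*"
        using rt_bwd[OF _ biE refl] by blast
      then have "b' = b j" using sig_inj bE[OF that(2)] unfolding inj_on_def by metis
      then have "b j \<in> h i" using b'(3) hcl that by blast
      moreover have "h j = (link_rel n E)\<^sup>* `` {b j}" using hcl that by blast
      moreover have "h i = (link_rel n E)\<^sup>* `` {b i}" using hcl that by blast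
      ultimately have "h j = h i" using comp_eq by metis
      moreover have "h i \<noteq> h j" using h that unfolding bij_betw_def inj_on_def by auto
      ultimately show False by simp
    qed
    then show ?thesis using comp_disj tcF that by blast
  qed
  have cc2: "translate (nu i) (c i) \<subseteq> young_of n J" if "i < r" for i
    using comp_sub[OF tcF[OF that]] skew_sub_young[OF L] by blast
  have cd: "\<forall>w\<in>Nn n. \<forall>v\<in>nu i. vadd (vadd v (c i)) w \<in> young_of n J \<longrightarrow> vadd v w \<in> nu i" if "i < r" for i
    by (rule closure_tr[OF refl]) (rule comp_closure[OF L tcF[OF that]])
  have "conds_abcd n (young_of n I) (young_of n J) r nu b c"
    unfolding conds_abcd_def using ca1 ca2 cb cc1 cc2 cd by blast
  moreover have "\<forall>i<r. connected_abstract_skew_shape n (nu i) \<and> b i \<in> Zn n \<and> c i \<in> Zn n"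
    using csk Zb Zc by blast
  moreover have "\<forall>i<r. \<forall>v\<in>nu i. phi (mon (vadd v (b i))) = mon (vadd v (c i))" using phim by blast
  ultimately show ?thesis using compE compF by blast
qed

end



lemma vadd_perm: "vadd (vadd p t) a = vadd (vadd p a) t"
  by (simp add: vadd_def fun_eq_iff algebra_simps)
lemma vsub_perm: "vsub (vadd x w) t = vadd (vsub x t) w"
  by (simp add: vadd_def vsub_def fun_eq_iff algebra_simps)

lemma linked_tr: "linked n A p q \<Longrightarrow> linked n (translate A t) (vadd p t) (vadd q t)"
proof -
  assume "linked n A p q"
  then obtain a' b' where h: "a' \<in> Nn n" "b' \<in> Nn n" "vadd p a' = vadd q b'" "vadd p a' \<in> A"
    unfolding linked_def by blast
  have "vadd (vadd p t) a' = vadd (vadd q t) b'" using h(3) by (simp add: vadd_perm)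
  moreover have "vadd (vadd p t) a' \<in> translate A t" using vadd_in_translate[OF h(4), of t] vadd_perm[of p t a'] by simp
  ultimately show ?thesis unfolding linked_def using h(1,2) by blast
qed

lemma link_rel_tr: "(p,q) \<in> link_rel n A \<Longrightarrow> (vadd p t, vadd q t) \<in> link_rel n (translate A t)"
  unfolding link_rel_def using linked_tr vadd_in_translate by blast

lemma rt_tr: "(p,q) \<in> (link_rel n A)\<^sup>* \<Longrightarrow> (vadd p t, vadd q t) \<in> (link_rel n (translate A t))\<^sup>*"
proof (induction rule: rtrancl_induct)
  case base then show ?case by simp
next
  case (step y z)
  from step.IH link_rel_tr[OF step(2), of t] show ?case by (rule rtrancl_into_rtrancl)
qed

lemma conn_tr: assumes "connected_set n A" shows "connected_set n (translate A t)"
proof -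
  have "translate A t \<noteq> {}" using assms unfolding connected_set_def translate_def by blast
  moreover have "translate A t \<times> translate A t \<subseteq> (link_rel n (translate A t))\<^sup>*"
  proof clarify
    fix x y assume "x \<in> translate A t" "y \<in> translate A t"
    then obtain p q where pq: "p \<in> A" "q \<in> A" "x = vadd p t" "y = vadd q t" unfolding translate_def by blast
    then have "(p,q) \<in> (link_rel n A)\<^sup>*" using assms unfolding connected_set_def by blast
    then show "(x,y) \<in> (link_rel n (translate A t))\<^sup>*" using rt_tr pq by blast
  qed
  ultimately show ?thesis unfolding connected_set_def by blast
qed

lemma link_rel_mono: "A \<subseteq> B \<Longrightarrow> link_rel n A \<subseteq> link_rel n B"
  unfolding link_rel_def linked_def by blast

lemma cass_conn: "connected_abstract_skew_shape n A \<Longrightarrow> connected_set n (translate A t)"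
  unfolding connected_abstract_skew_shape_def using conn_tr by blast

locale P2side =
  fixes n :: nat and lam :: "pt set" and r :: nat and nu :: "nat \<Rightarrow> pt set" and b :: "nat \<Rightarrow> pt"
  assumes ylam: "young n lam"
    and cass: "\<And>i. i < r \<Longrightarrow> connected_abstract_skew_shape n (nu i)"
    and disj: "\<And>i j. i < r \<Longrightarrow> j < r \<Longrightarrow> i \<noteq> j \<Longrightarrow> translate (nu i) (b i) \<inter> translate (nu j) (b j) = {}"
    and sub: "\<And>i. i < r \<Longrightarrow> translate (nu i) (b i) \<subseteq> lam"
    and cl: "\<And>i. i < r \<Longrightarrow> \<forall>w\<in>Nn n. \<forall>v\<in>nu i. vadd (vadd v (b i)) w \<in> lam \<longrightarrow> vadd v w \<in> nu i"
begin

definition Cb :: "nat \<Rightarrow> pt set" where "Cb i = translate (nu i) (b i)"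
definition U :: "pt set" where "U = (\<Union>i<r. Cb i)"
definition Iof :: "pt set" where "Iof = Nn n - lam"
definition Kof :: "pt set" where "Kof = Iof \<union> U"

lemma lamN: "lam \<subseteq> Nn n" using ylam unfolding young_def by blast
lemma U_lam: "U \<subseteq> lam" unfolding U_def Cb_def using sub by blast

lemma closure: assumes i: "i < r" and x: "x \<in> Cb i" and w: "w \<in> Nn n" and xw: "vadd x w \<in> lam"
  shows "vadd x w \<in> Cb i"
proof -
  have v: "vsub x (b i) \<in> nu i" using x unfolding Cb_def mem_translate .
  have "vadd (vadd (vsub x (b i)) (b i)) w \<in> lam" using xw by simp
  then have "vadd (vsub x (b i)) w \<in> nu i" using cl[OF i] w v by blast
  then show ?thesis unfolding Cb_def mem_translate vsub_perm .
qed

lemma I_ideal: "monomial_ideal n Iof"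
  unfolding monomial_ideal_def Iof_def
proof (intro conjI ballI)
  show "Nn n - lam \<subseteq> Nn n" by blast
  fix a w assume a: "a \<in> Nn n - lam" and w: "w \<in> Nn n"
  have aw: "vadd a w \<in> Nn n" using vadd_Nn a w by blast
  have "vadd a w \<notin> lam"
  proof
    assume "vadd a w \<in> lam"
    then have "a \<in> lam" using ylam a vle_vadd[OF w] unfolding young_def by blast
    then show False using a by blast
  qed
  then show "vadd a w \<in> Nn n - lam" using aw by blast
qed

lemma K_ideal: "monomial_ideal n Kof"
  unfolding monomial_ideal_def
proof (intro conjI ballI)
  show "Kof \<subseteq> Nn n" unfolding Kof_def Iof_def using U_lam lamN by blast
  fix a w assume a: "a \<in> Kof" and w: "w \<in> Nn n"
  show "vadd a w \<in> Kof"
  proof (cases "a \<in> Iof")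
    case True then show ?thesis using I_ideal w unfolding monomial_ideal_def Kof_def by blast
  next
    case False
    then have "a \<in> U" using a Kof_def by blast
    then obtain i where i: "i < r" "a \<in> Cb i" unfolding U_def by blast
    have aN: "a \<in> Nn n" using \<open>a \<in> U\<close> U_lam lamN by blast
    have aw: "vadd a w \<in> Nn n" using vadd_Nn aN w by blast
    show ?thesis
    proof (cases "vadd a w \<in> lam")
      case True then have "vadd a w \<in> Cb i" using closure i w by blast
      then show ?thesis unfolding Kof_def U_def using i by blast
    next
      case False then show ?thesis unfolding Kof_def Iof_def using aw by blast
    qed
  qed
qed

lemma IK: "Iof \<subseteq> Kof" unfolding Kof_def by blast
lemma young_I: "young_of n Iof = lam" unfolding young_of_def Iof_def using lamN by blast
lemma fin_I: "finite (young_of n Iof)" unfolding young_I using ylam unfolding young_def by simp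
lemma skew_KI: "skew_of Kof Iof = U" unfolding skew_of_def Kof_def Iof_def using U_lam by blast

lemma Cb_U: "i < r \<Longrightarrow> Cb i \<subseteq> U" unfolding U_def by blast

lemma step_stay: assumes pq: "(p,q) \<in> link_rel n U" and i: "i < r" and p: "p \<in> Cb i"
  shows "q \<in> Cb i"
proof -
  obtain a' b' where h: "a' \<in> Nn n" "b' \<in> Nn n" "vadd p a' = vadd q b'" "vadd p a' \<in> U"
    using pq unfolding link_rel_def linked_def by blast
  have "q \<in> U" using pq link_rel_in by blast
  then obtain j where j: "j < r" "q \<in> Cb j" unfolding U_def by blast
  have zl: "vadd p a' \<in> lam" using h(4) U_lam by blast
  have "vadd p a' \<in> Cb i" using closure[OF i p h(1) zl] .
  moreover have "vadd q b' \<in> Cb j" using closure[OF j(1) j(2) h(2)] zl h(3) by simp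
  ultimately have m: "vadd p a' \<in> Cb i \<inter> Cb j" using h(3) by simp
  have "i = j"
  proof (rule ccontr)
    assume "i \<noteq> j"
    then have "Cb i \<inter> Cb j = {}" using disj[OF i j(1)] unfolding Cb_def by blast
    then show False using m by blast
  qed
  then show ?thesis using j by simp
qed

lemma rt_stay: "(p,q) \<in> (link_rel n U)\<^sup>* \<Longrightarrow> i < r \<Longrightarrow> p \<in> Cb i \<Longrightarrow> q \<in> Cb i"
  by (induction rule: rtrancl_induct) (auto intro: step_stay)

lemma Cb_conn: "i < r \<Longrightarrow> connected_set n (Cb i)"
  unfolding Cb_def using cass_conn cass by blast

lemma class_Cb: assumes i: "i < r" and p: "p \<in> Cb i" shows "(link_rel n U)\<^sup>* `` {p} = Cb i"
proof
  show "(link_rel n U)\<^sup>* `` {p} \<subseteq> Cb i" using rt_stay i p by blast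
  have "(link_rel n (Cb i))\<^sup>* \<subseteq> (link_rel n U)\<^sup>*" using link_rel_mono[OF Cb_U[OF i]] by (rule rtrancl_mono)
  then show "Cb i \<subseteq> (link_rel n U)\<^sup>* `` {p}" using Cb_conn[OF i] p unfolding connected_set_def by blast
qed

lemma comps: "components n U = {translate (nu i) (b i) | i. i < r}"
proof
  show "components n U \<subseteq> {translate (nu i) (b i) | i. i < r}"
  proof
    fix C assume "C \<in> components n U"
    then obtain a where a: "a \<in> U" "C = (link_rel n U)\<^sup>* `` {a}" unfolding components_def by blast
    then obtain i where "i < r" "a \<in> Cb i" unfolding U_def by blast
    then have "C = Cb i" using class_Cb a by simp
    then show "C \<in> {translate (nu i) (b i) | i. i < r}" unfolding Cb_def using \<open>i < r\<close> by blast
  qed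
  show "{translate (nu i) (b i) | i. i < r} \<subseteq> components n U"
  proof clarify
    fix i assume i: "i < r"
    then obtain p where p: "p \<in> Cb i" using Cb_conn unfolding connected_set_def by blast
    then have "p \<in> U" using Cb_U i by blast
    then have "Cb i \<in> components n U"
      using class_Cb[OF i p] unfolding components_def by blast
    then show "translate (nu i) (b i) \<in> components n U" unfolding Cb_def .
  qed
qed

definition idx :: "pt \<Rightarrow> nat" where "idx x = (SOME i. i < r \<and> x \<in> Cb i)"

lemma idx_eq: assumes i: "i < r" and x: "x \<in> Cb i" shows "idx x = i"
proof -
  have "idx x < r \<and> x \<in> Cb (idx x)" unfolding idx_def by (rule someI_ex) (use i x in blast)
  show ?thesis
  proof (rule ccontr)
    assume "idx x \<noteq> i"
    then have "Cb i \<inter> Cb (idx x) = {}" using disj[OF i, of "idx x"] \<open>idx x < r \<and> x \<in> Cb (idx x)\<close> unfolding Cb_def by auto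
    then show False using x \<open>idx x < r \<and> x \<in> Cb (idx x)\<close> by blast
  qed
qed

end



context P2side begin
lemma sub_stay: assumes i: "i < r" and x: "x \<in> Cb i" and w: "w \<in> Nn n" and xw: "vsub x w \<in> U"
  shows "vsub x w \<in> Cb i"
proof -
  obtain j where j: "j < r" "vsub x w \<in> Cb j" using xw unfolding U_def by blast
  have "x \<in> lam" using x sub[OF i] unfolding Cb_def by blast
  then have "x \<in> Cb j" using closure[OF j w] by simp
  then have "i = j" using idx_eq i j x by metis
  then show ?thesis using j by simp
qed

lemma mem_iff: assumes i: "i < r" and v: "v \<in> nu i" and w: "w \<in> Nn n"
  shows "vsub (vadd v (b i)) w \<in> U \<longleftrightarrow> vsub v w \<in> nu i"
proof
  have x: "vadd v (b i) \<in> Cb i" unfolding Cb_def using vadd_in_translate[OF v] .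
  assume "vsub (vadd v (b i)) w \<in> U"
  then have "vsub (vadd v (b i)) w \<in> Cb i" using sub_stay[OF i x w] by blast
  then show "vsub v w \<in> nu i" unfolding Cb_def mem_translate vsub_perm by simp
next
  assume "vsub v w \<in> nu i"
  then have "vadd (vsub v w) (b i) \<in> Cb i" unfolding Cb_def by (rule vadd_in_translate)
  then show "vsub (vadd v (b i)) w \<in> U" using Cb_U[OF i] vsub_perm[of v "b i" w] by auto
qed
end

locale P2 = S1: P2side n lam r nu b + S2: P2side n mu r nu c
  for n lam mu r nu b c
begin

definition sig :: "pt \<Rightarrow> pt" where "sig x = vadd (vsub x (b (S1.idx x))) (c (S1.idx x))"
definition tau :: "pt \<Rightarrow> pt" where "tau y = vadd (vsub y (c (S2.idx y))) (b (S2.idx y))"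
definition phi :: "(pt \<Rightarrow> 'k::field) \<Rightarrow> pt \<Rightarrow> 'k" where
  "phi f = (\<lambda>y. if y \<in> S2.U then f (tau y) else 0)"
definition psi :: "(pt \<Rightarrow> 'k::field) \<Rightarrow> pt \<Rightarrow> 'k" where
  "psi g = (\<lambda>x. if x \<in> S1.U then g (sig x) else 0)"

lemma sig_v: assumes i: "i < r" and v: "v \<in> nu i"
  shows "sig (vadd v (b i)) = vadd v (c i)"
proof -
  have "vadd v (b i) \<in> S1.Cb i" unfolding S1.Cb_def using vadd_in_translate[OF v] .
  then have "S1.idx (vadd v (b i)) = i" using S1.idx_eq i by blast
  then show ?thesis unfolding sig_def by simp
qed

lemma tau_v: assumes i: "i < r" and v: "v \<in> nu i"
  shows "tau (vadd v (c i)) = vadd v (b i)"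
proof -
  have "vadd v (c i) \<in> S2.Cb i" unfolding S2.Cb_def using vadd_in_translate[OF v] .
  then have "S2.idx (vadd v (c i)) = i" using S2.idx_eq i by blast
  then show ?thesis unfolding tau_def by simp
qed

lemma U1_cases: "x \<in> S1.U \<Longrightarrow> \<exists>i v. i < r \<and> v \<in> nu i \<and> x = vadd v (b i)"
  unfolding S1.U_def S1.Cb_def translate_def by blast
lemma U2_cases: "y \<in> S2.U \<Longrightarrow> \<exists>i v. i < r \<and> v \<in> nu i \<and> y = vadd v (c i)"
  unfolding S2.U_def S2.Cb_def translate_def by blast
lemma in_U1: "i < r \<Longrightarrow> v \<in> nu i \<Longrightarrow> vadd v (b i) \<in> S1.U"
  unfolding S1.U_def S1.Cb_def using vadd_in_translate by blast
lemma in_U2: "i < r \<Longrightarrow> v \<in> nu i \<Longrightarrow> vadd v (c i) \<in> S2.U"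
  unfolding S2.U_def S2.Cb_def using vadd_in_translate by blast

lemma sig_U: "x \<in> S1.U \<Longrightarrow> sig x \<in> S2.U \<and> tau (sig x) = x"
  using U1_cases sig_v tau_v in_U2 by metis
lemma tau_U: "y \<in> S2.U \<Longrightarrow> tau y \<in> S1.U \<and> sig (tau y) = y"
  using U2_cases sig_v tau_v in_U1 by metis

lemma phi_q: "phi f \<in> qcarrier S2.U" unfolding phi_def qcarrier_def by simp
lemma psi_q: "psi f \<in> qcarrier S1.U" unfolding psi_def qcarrier_def by simp

lemma phi_bij: "bij_betw (phi :: (pt \<Rightarrow> 'k::field) \<Rightarrow> _) (qcarrier S1.U) (qcarrier S2.U)"
proof (rule bij_betw_byWitness[where f'=psi])
  show "\<forall>f\<in>qcarrier S1.U. psi (phi f) = (f :: pt \<Rightarrow> 'k)"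
  proof
    fix f :: "pt \<Rightarrow> 'k" assume f: "f \<in> qcarrier S1.U"
    show "psi (phi f) = f"
    proof
      fix x show "psi (phi f) x = f x"
        using f sig_U[of x] unfolding psi_def phi_def qcarrier_def by auto
    qed
  qed
  show "\<forall>g\<in>qcarrier S2.U. phi (psi g) = (g :: pt \<Rightarrow> 'k)"
  proof
    fix g :: "pt \<Rightarrow> 'k" assume g: "g \<in> qcarrier S2.U"
    show "phi (psi g) = g"
    proof
      fix y show "phi (psi g) y = g y"
        using g tau_U[of y] unfolding psi_def phi_def qcarrier_def by auto
    qed
  qed
  show "phi ` qcarrier S1.U \<subseteq> qcarrier S2.U" using phi_q by blast
  show "psi ` qcarrier S2.U \<subseteq> qcarrier S1.U" using psi_q by blast
qed

lemma phi_mact: assumes w: "w \<in> Nn n"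
  shows "phi (mact S1.U w f) = mact S2.U w (phi (f :: pt \<Rightarrow> 'k::field))"
proof
  fix y
  show "phi (mact S1.U w f) y = mact S2.U w (phi f) y"
  proof (cases "y \<in> S2.U")
    case False then show ?thesis unfolding phi_def mact_def by simp
  next
    case True
    then obtain i v where iv: "i < r" "v \<in> nu i" "y = vadd v (c i)" using U2_cases by blast
    have ty: "tau y = vadd v (b i)" using tau_v iv by simp
    have xU: "vadd v (b i) \<in> S1.U" using in_U1 iv by blast
    have e1: "vsub (vadd v (b i)) w \<in> S1.U \<longleftrightarrow> vsub v w \<in> nu i" using S1.mem_iff iv w by blast
    have e2: "vsub (vadd v (c i)) w \<in> S2.U \<longleftrightarrow> vsub v w \<in> nu i" using S2.mem_iff iv w by blast
    show ?thesis
    proof (cases "vsub v w \<in> nu i")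
      case False
      then show ?thesis using e1 e2 True iv(3) ty unfolding phi_def mact_def by simp
    next
      case T2: True
      have "tau (vsub y w) = vsub (vadd v (b i)) w"
        using tau_v[OF iv(1) T2] iv(3) by (simp add: vsub_perm)
      then show ?thesis using e1 e2 T2 True iv(3) ty xU unfolding phi_def mact_def by simp
    qed
  qed
qed

lemma phi_mon: assumes "x \<in> S1.U" shows "phi (mon x) = (mon (sig x) :: pt \<Rightarrow> 'k::field)"
proof
  fix y
  show "phi (mon x) y = (mon (sig x) y :: 'k)"
  proof (cases "y \<in> S2.U")
    case True
    then have "tau y = x \<longleftrightarrow> y = sig x" using sig_U[OF assms] tau_U[OF True] by metis
    then show ?thesis using True unfolding phi_def mon_def by simp
  next
    case False
    then have "y \<noteq> sig x" using sig_U[OF assms] by blast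
    then show ?thesis using False unfolding phi_def mon_def by simp
  qed
qed

lemma iso: "module_iso n S1.U S2.U (phi :: (pt \<Rightarrow> 'k::field) \<Rightarrow> _)"
  unfolding module_iso_def
proof (intro conjI ballI allI)
  show "bij_betw (phi :: (pt \<Rightarrow> 'k::field) \<Rightarrow> _) (qcarrier S1.U) (qcarrier S2.U)" by (rule phi_bij)
  fix f g :: "pt \<Rightarrow> 'k"
  show "phi (\<lambda>a. f a + g a) = (\<lambda>a. phi f a + phi g a)" unfolding phi_def by auto
next
  fix c :: 'k and f :: "pt \<Rightarrow> 'k"
  show "phi (\<lambda>a. c * f a) = (\<lambda>a. c * phi f a)" unfolding phi_def by auto
next
  fix w and f :: "pt \<Rightarrow> 'k" assume "w \<in> Nn n"
  then show "phi (mact S1.U w f) = mact S2.U w (phi f)" by (rule phi_mact)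
qed

lemma sends: "sends_monomials S1.U S2.U (phi :: (pt \<Rightarrow> 'k::field) \<Rightarrow> _)"
  unfolding sends_monomials_def using phi_mon sig_U by blast

end



theorem corollary2p1:
  fixes n :: nat
  shows
  "(\<forall>K I L J (phi :: (pt \<Rightarrow> 'k::field) \<Rightarrow> (pt \<Rightarrow> 'k)).
      monomial_ideal n I \<and> monomial_ideal n K \<and> I \<subseteq> K \<and>
      monomial_ideal n J \<and> monomial_ideal n L \<and> J \<subseteq> L \<and>
      finite (young_of n I) \<and> finite (young_of n J) \<and>
      module_iso n (skew_of K I) (skew_of L J) phi \<and>
      sends_monomials (skew_of K I) (skew_of L J) phi \<longrightarrow>
      (\<exists>r nu b c.
         (\<forall>i<r. connected_abstract_skew_shape n (nu i) \<and> b i \<in> Zn n \<and> c i \<in> Zn n) \<and>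
         components n (skew_of K I) = {translate (nu i) (b i) | i. i < r} \<and>
         components n (skew_of L J) = {translate (nu i) (c i) | i. i < r} \<and>
         (\<forall>i<r. \<forall>v\<in>nu i. phi (mon (vadd v (b i))) = mon (vadd v (c i))) \<and>
         conds_abcd n (young_of n I) (young_of n J) r nu b c))
   \<and>
   (\<forall>lam mu r nu b c.
      young n lam \<and> young n mu \<and>
      (\<forall>i<r. connected_abstract_skew_shape n (nu i) \<and> b i \<in> Zn n \<and> c i \<in> Zn n) \<and>
      conds_abcd n lam mu r nu b c \<longrightarrow>
      (\<exists>K I L J (phi :: (pt \<Rightarrow> 'k) \<Rightarrow> (pt \<Rightarrow> 'k)).
         monomial_ideal n I \<and> monomial_ideal n K \<and> I \<subseteq> K \<and>
         monomial_ideal n J \<and> monomial_ideal n L \<and> J \<subseteq> L \<and>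
         finite (young_of n I) \<and> finite (young_of n J) \<and>
         module_iso n (skew_of K I) (skew_of L J) phi \<and>
         sends_monomials (skew_of K I) (skew_of L J) phi \<and>
         young_of n I = lam \<and> young_of n J = mu \<and>
         components n (skew_of K I) = {translate (nu i) (b i) | i. i < r} \<and>
         components n (skew_of L J) = {translate (nu i) (c i) | i. i < r} \<and>
         (\<forall>i<r. \<forall>v\<in>nu i. phi (mon (vadd v (b i))) = mon (vadd v (c i)))))"
proof (intro conjI allI impI)
  fix K I L J and phi :: "(pt \<Rightarrow> 'k::field) \<Rightarrow> (pt \<Rightarrow> 'k)"
  assume H: "monomial_ideal n I \<and> monomial_ideal n K \<and> I \<subseteq> K \<and>
      monomial_ideal n J \<and> monomial_ideal n L \<and> J \<subseteq> L \<and>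
      finite (young_of n I) \<and> finite (young_of n J) \<and>
      module_iso n (skew_of K I) (skew_of L J) phi \<and>
      sends_monomials (skew_of K I) (skew_of L J) phi"
  interpret P1 n K I L J phi using H by unfold_locales auto
  show "\<exists>r nu b c.
         (\<forall>i<r. connected_abstract_skew_shape n (nu i) \<and> b i \<in> Zn n \<and> c i \<in> Zn n) \<and>
         components n (skew_of K I) = {translate (nu i) (b i) | i. i < r} \<and>
         components n (skew_of L J) = {translate (nu i) (c i) | i. i < r} \<and>
         (\<forall>i<r. \<forall>v\<in>nu i. phi (mon (vadd v (b i))) = mon (vadd v (c i))) \<and>
         conds_abcd n (young_of n I) (young_of n J) r nu b c" by (rule part1)
next
  fix lam mu r nu b c
  assume H: "young n lam \<and> young n mu \<and>
      (\<forall>i<r. connected_abstract_skew_shape n (nu i) \<and> b i \<in> Zn n \<and> c i \<in> Zn n) \<and>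
      conds_abcd n lam mu r nu b c"
  interpret P2 n lam mu r nu b c
    using H unfolding conds_abcd_def by unfold_locales auto
  have pm: "\<forall>i<r. \<forall>v\<in>nu i. (phi :: (pt \<Rightarrow> 'k::field) \<Rightarrow> (pt \<Rightarrow> 'k)) (mon (vadd v (b i))) = mon (vadd v (c i))"
  proof (intro allI impI ballI)
    fix i v assume "i < r" "v \<in> nu i"
    then show "(phi :: (pt \<Rightarrow> 'k::field) \<Rightarrow> (pt \<Rightarrow> 'k)) (mon (vadd v (b i))) = mon (vadd v (c i))"
      using phi_mon[OF in_U1] sig_v by simp
  qed
  have "monomial_ideal n S1.Iof \<and> monomial_ideal n S1.Kof \<and> S1.Iof \<subseteq> S1.Kof \<and>
         monomial_ideal n S2.Iof \<and> monomial_ideal n S2.Kof \<and> S2.Iof \<subseteq> S2.Kof \<and>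
         finite (young_of n S1.Iof) \<and> finite (young_of n S2.Iof) \<and>
         module_iso n (skew_of S1.Kof S1.Iof) (skew_of S2.Kof S2.Iof) (phi :: (pt \<Rightarrow> 'k) \<Rightarrow> (pt \<Rightarrow> 'k)) \<and>
         sends_monomials (skew_of S1.Kof S1.Iof) (skew_of S2.Kof S2.Iof) (phi :: (pt \<Rightarrow> 'k) \<Rightarrow> (pt \<Rightarrow> 'k)) \<and>
         young_of n S1.Iof = lam \<and> young_of n S2.Iof = mu \<and>
         components n (skew_of S1.Kof S1.Iof) = {translate (nu i) (b i) | i. i < r} \<and>
         components n (skew_of S2.Kof S2.Iof) = {translate (nu i) (c i) | i. i < r} \<and>
         (\<forall>i<r. \<forall>v\<in>nu i. (phi :: (pt \<Rightarrow> 'k) \<Rightarrow> (pt \<Rightarrow> 'k)) (mon (vadd v (b i))) = mon (vadd v (c i)))"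
    unfolding S1.skew_KI S2.skew_KI
    by (intro conjI S1.I_ideal S1.K_ideal S1.IK S2.I_ideal S2.K_ideal S2.IK S1.fin_I S2.fin_I iso sends
      S1.young_I S2.young_I S1.comps S2.comps pm)
  then show "\<exists>K I L J (phi :: (pt \<Rightarrow> 'k) \<Rightarrow> (pt \<Rightarrow> 'k)).
         monomial_ideal n I \<and> monomial_ideal n K \<and> I \<subseteq> K \<and>
         monomial_ideal n J \<and> monomial_ideal n L \<and> J \<subseteq> L \<and>
         finite (young_of n I) \<and> finite (young_of n J) \<and>
         module_iso n (skew_of K I) (skew_of L J) phi \<and>
         sends_monomials (skew_of K I) (skew_of L J) phi \<and>
         young_of n I = lam \<and> young_of n J = mu \<and>
         components n (skew_of K I) = {translate (nu i) (b i) | i. i < r} \<and>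
         components n (skew_of L J) = {translate (nu i) (c i) | i. i < r} \<and>
         (\<forall>i<r. \<forall>v\<in>nu i. phi (mon (vadd v (b i))) = mon (vadd v (c i)))"
    by (intro exI) assumption
qed



end
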